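(* Let $\mathcal{H}_A$ and $\mathcal{H}_B$ be $d$-dimensional Hilbert spaces. Let $\{\ket{k}\}_{k=1}^d$ be an orthonormal basis of each space, and fix a unit vector $\ket{b}\in\mathcal{H}_B$. Let $U$ be a unitary on $\mathcal{H}_A\otimes\mathcal{H}_B$ with $U(\ket{k}\otimes\ket{b})=\ket{k}\otimes\ket{k}$ for all $k$. Then $(U,\ket{b})$ masks the family of states $$\ket{a_\phi}=\tfrac{1}{\sqrt d}\sum_{k=1}^d e^{i\phi_k}\ket{k},\qquad \phi=(\phi_1,\dots,\phi_d)\in[-\pi,\pi]^d.$$ That is, for every such $\ket{a_\phi}$, both marginals of $U(\ket{a_\phi}\otimes\ket{b})$ equal the same state $I/d$, independent of $\phi$. More generally, for every density operator $\sigma$ on $\mathcal{H}_A$ that is a convex combination of the projectors $\ket{a_\phi}\bra{a_\phi}$, both marginals of $U(\sigma\otimes\ket{b}\bra{b})U^\dagger$ equal $I/d$.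
   Context: A masker for a set of states on $\mathcal{H}_A$ is a unitary $U$ on $\mathcal{H}_A\otimes\mathcal{H}_B$ together with a fixed ancilla state $\ket{b}\in\mathcal{H}_B$. It masks the set if, for every state in the set, the reduced states on $A$ and on $B$ of the output $U(\cdot\otimes\ket{b})$ do not depend on which state of the set was input. The convex hull of the states $\ket{a_\phi}$ is called the great hyper-disk. A unitary with the stated action exists, since the vectors $\ket{k}\otimes\ket{k}$ are orthonormal. *)

theory Defs
  imports "HOL-Analysis.Analysis"
begin

text \<open>Finite-dimensional Hilbert spaces are modelled as \<open>complex ^ 'n\<close> with
  \<open>d = CARD('n)\<close>; operators as \<open>complex ^ 'n ^ 'n\<close> matrices; the bipartite space
  \<open>H_A \<otimes> H_B\<close> as \<open>complex ^ ('a \<times> 'b)\<close>.\<close>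

definition cinner :: "complex ^ 'n \<Rightarrow> complex ^ 'n \<Rightarrow> complex" where
  "cinner u v = (\<Sum>i\<in>UNIV. cnj (u $ i) * v $ i)"

definition orthonormal_basis :: "('n::finite \<Rightarrow> complex ^ 'n) \<Rightarrow> bool" where
  "orthonormal_basis e \<longleftrightarrow> (\<forall>k l. cinner (e k) (e l) = (if k = l then 1 else 0))"

definition outer :: "complex ^ 'n \<Rightarrow> complex ^ 'n \<Rightarrow> complex ^ 'n ^ 'n" where
  "outer u v = (\<chi> i j. u $ i * cnj (v $ j))"

definition mat_adjoint :: "complex ^ 'n ^ 'm \<Rightarrow> complex ^ 'm ^ 'n" where
  "mat_adjoint U = (\<chi> i j. cnj (U $ j $ i))"

definition unitary_mat :: "complex ^ 'n ^ 'n \<Rightarrow> bool" where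
  "unitary_mat U \<longleftrightarrow> U ** mat_adjoint U = mat 1 \<and> mat_adjoint U ** U = mat 1"

definition tensor_vec :: "complex ^ 'a \<Rightarrow> complex ^ 'b \<Rightarrow> complex ^ ('a \<times> 'b)" where
  "tensor_vec u v = (\<chi> p. u $ fst p * v $ snd p)"

definition tensor_mat :: "complex ^ 'a ^ 'a \<Rightarrow> complex ^ 'b ^ 'b \<Rightarrow> complex ^ ('a \<times> 'b) ^ ('a \<times> 'b)" where
  "tensor_mat A B = (\<chi> p q. A $ fst p $ fst q * B $ snd p $ snd q)"

definition ptrace_B :: "complex ^ ('a \<times> 'b::finite) ^ ('a \<times> 'b) \<Rightarrow> complex ^ 'a ^ 'a" where
  "ptrace_B \<rho> = (\<chi> i i'. \<Sum>j\<in>UNIV. \<rho> $ (i, j) $ (i', j))"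

definition ptrace_A :: "complex ^ ('a::finite \<times> 'b) ^ ('a \<times> 'b) \<Rightarrow> complex ^ 'b ^ 'b" where
  "ptrace_A \<rho> = (\<chi> j j'. \<Sum>i\<in>UNIV. \<rho> $ (i, j) $ (i, j'))"

definition a_state :: "('n::finite \<Rightarrow> complex ^ 'n) \<Rightarrow> ('n \<Rightarrow> real) \<Rightarrow> complex ^ 'n" where
  "a_state e \<phi> = (\<chi> i. (\<Sum>k\<in>UNIV. exp (\<i> * complex_of_real (\<phi> k)) * e k $ i)
                        / complex_of_real (sqrt (real CARD('n))))"

definition max_mixed :: "complex ^ 'n ^ 'n" where
  "max_mixed = (1 / real CARD('n)) *\<^sub>R mat 1"

end

theory Submission
  imports Defs
begin

lemma completeness:
  fixes e :: "'n::finite \<Rightarrow> complex ^ 'n"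
  assumes "orthonormal_basis e"
  shows "(\<Sum>k\<in>UNIV. e k $ i * cnj (e k $ i')) = (if i = i' then 1 else 0)"
proof -
  let ?A = "(\<chi> k i. cnj (e k $ i)) :: complex^'n^'n"
  let ?B = "(\<chi> i k. e k $ i) :: complex^'n^'n"
  have "?A ** ?B = mat 1"
    using assms unfolding orthonormal_basis_def cinner_def
    by (simp add: vec_eq_iff matrix_matrix_mult_def mat_def)
  hence "?B ** ?A = mat 1" by (rule matrix_left_right_inverse1)
  hence "(?B ** ?A) $ i $ i' = mat 1 $ i $ i'" by simp
  thus ?thesis by (simp add: matrix_matrix_mult_def mat_def)
qed

lemma mult_outer:
  fixes U :: "complex^'m^'m"
  shows "U ** outer v w ** mat_adjoint U = outer (U *v v) (U *v w)"
  by (simp add: vec_eq_iff matrix_matrix_mult_def matrix_vector_mult_def outer_def mat_adjoint_def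
      sum_distrib_left sum_distrib_right mult_ac)

lemma tensor_outer: "tensor_mat (outer a a') (outer b b') = outer (tensor_vec a b) (tensor_vec a' b')"
  by (simp add: vec_eq_iff tensor_mat_def outer_def tensor_vec_def mult_ac)

lemma sc: "r *\<^sub>R (z::complex) = of_real r * z" by (simp add: scaleR_conv_of_real)

lemma G_lin:
  fixes U :: "complex^('a::finite\<times>'b::finite)^('a\<times>'b)"
  shows "U ** tensor_mat (u *\<^sub>R x + v *\<^sub>R y) B ** mat_adjoint U
     = u *\<^sub>R (U ** tensor_mat x B ** mat_adjoint U) + v *\<^sub>R (U ** tensor_mat y B ** mat_adjoint U)"
  by (simp add: vec_eq_iff matrix_matrix_mult_def tensor_mat_def mat_adjoint_def sc
      sum_distrib_left sum_distrib_right sum.distrib ring_distribs mult_ac)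

lemma ptB_lin: "ptrace_B (u *\<^sub>R x + v *\<^sub>R y) = u *\<^sub>R ptrace_B x + v *\<^sub>R ptrace_B y"
  by (simp add: vec_eq_iff ptrace_B_def sc sum_distrib_left sum.distrib)
lemma ptA_lin: "ptrace_A (u *\<^sub>R x + v *\<^sub>R y) = u *\<^sub>R ptrace_A x + v *\<^sub>R ptrace_A y"
  by (simp add: vec_eq_iff ptrace_A_def sc sum_distrib_left sum.distrib)

lemma push:
  fixes U :: "complex^'m^'m"
  shows "U *v (\<Sum>k\<in>S. c k *s x k) = (\<Sum>k\<in>S. c k *s (U *v x k))"
  by (simp add: vec_eq_iff matrix_vector_mult_def sum_component sum_distrib_left mult_ac sum.swap[of _ S])

lemma orth: "orthonormal_basis e \<Longrightarrow> (\<Sum>j\<in>UNIV. e k $ j * cnj (e l $ j)) = (if k = l then 1 else 0)"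
  unfolding orthonormal_basis_def cinner_def
  by (metis (no_types, lifting) mult.commute sum.cong)

lemma mm: "(max_mixed :: complex^'n^'n) $ i $ i' = (if i = i' then 1 / of_nat CARD('n::finite) else 0)"
  by (simp add: max_mixed_def mat_def sc)

lemma pure:
  fixes eA eB :: "'n::finite \<Rightarrow> complex ^ 'n"
  assumes onbA: "orthonormal_basis eA" and onbB: "orthonormal_basis eB"
    and cc: "\<And>k. c k * cnj (c k) = 1 / of_nat CARD('n)"
    and psi: "\<psi> = (\<Sum>k\<in>UNIV. c k *s tensor_vec (eA k) (eB k))"
  shows "ptrace_B (outer \<psi> \<psi>) = max_mixed \<and> ptrace_A (outer \<psi> \<psi>) = max_mixed"
proof -
  have pc: "\<psi> $ (i, j) = (\<Sum>k\<in>UNIV. c k * (eA k $ i * eB k $ j))" for i j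
    by (simp add: psi sum_component tensor_vec_def)
  have B: "ptrace_B (outer \<psi> \<psi>) $ i $ i' = max_mixed $ i $ i'" for i i'
  proof -
    have "ptrace_B (outer \<psi> \<psi>) $ i $ i' = (\<Sum>j\<in>UNIV. (\<Sum>k\<in>UNIV. c k * (eA k $ i * eB k $ j)) * cnj (\<Sum>l\<in>UNIV. c l * (eA l $ i' * eB l $ j)))"
      by (simp add: ptrace_B_def outer_def pc)
    also have "\<dots> = (\<Sum>j\<in>UNIV. \<Sum>k\<in>UNIV. \<Sum>l\<in>UNIV. c k * cnj (c l) * eA k $ i * cnj (eA l $ i') * (eB k $ j * cnj (eB l $ j)))"
      by (simp add: sum_product mult_ac)
    also have "\<dots> = (\<Sum>k\<in>UNIV. \<Sum>l\<in>UNIV. \<Sum>j\<in>UNIV. c k * cnj (c l) * eA k $ i * cnj (eA l $ i') * (eB k $ j * cnj (eB l $ j)))"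
      by (rule trans[OF sum.swap], rule sum.cong[OF refl], rule sum.swap)
    also have "\<dots> = (\<Sum>k\<in>UNIV. \<Sum>l\<in>UNIV. c k * cnj (c l) * eA k $ i * cnj (eA l $ i') * (\<Sum>j\<in>UNIV. eB k $ j * cnj (eB l $ j)))"
      by (simp add: sum_distrib_left)
    also have "\<dots> = (\<Sum>k\<in>UNIV. \<Sum>l\<in>UNIV. if k = l then c k * cnj (c l) * eA k $ i * cnj (eA l $ i') else 0)"
      by (intro sum.cong refl) (simp add: orth[OF onbB])
    also have "\<dots> = (\<Sum>k\<in>UNIV. c k * cnj (c k) * (eA k $ i * cnj (eA k $ i')))"
      by (simp add: mult_ac)
    also have "\<dots> = 1 / of_nat CARD('n) * (\<Sum>k\<in>UNIV. eA k $ i * cnj (eA k $ i'))"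
      by (simp add: cc sum_distrib_left)
    also have "\<dots> = max_mixed $ i $ i'"
      by (simp add: completeness[OF onbA] mm)
    finally show ?thesis .
  qed
  have A: "ptrace_A (outer \<psi> \<psi>) $ j $ j' = max_mixed $ j $ j'" for j j'
  proof -
    have "ptrace_A (outer \<psi> \<psi>) $ j $ j' = (\<Sum>i\<in>UNIV. (\<Sum>k\<in>UNIV. c k * (eA k $ i * eB k $ j)) * cnj (\<Sum>l\<in>UNIV. c l * (eA l $ i * eB l $ j')))"
      by (simp add: ptrace_A_def outer_def pc)
    also have "\<dots> = (\<Sum>i\<in>UNIV. \<Sum>k\<in>UNIV. \<Sum>l\<in>UNIV. c k * cnj (c l) * eB k $ j * cnj (eB l $ j') * (eA k $ i * cnj (eA l $ i)))"
      by (simp add: sum_product mult_ac)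
    also have "\<dots> = (\<Sum>k\<in>UNIV. \<Sum>l\<in>UNIV. \<Sum>i\<in>UNIV. c k * cnj (c l) * eB k $ j * cnj (eB l $ j') * (eA k $ i * cnj (eA l $ i)))"
      by (rule trans[OF sum.swap], rule sum.cong[OF refl], rule sum.swap)
    also have "\<dots> = (\<Sum>k\<in>UNIV. \<Sum>l\<in>UNIV. c k * cnj (c l) * eB k $ j * cnj (eB l $ j') * (\<Sum>i\<in>UNIV. eA k $ i * cnj (eA l $ i)))"
      by (simp add: sum_distrib_left)
    also have "\<dots> = (\<Sum>k\<in>UNIV. \<Sum>l\<in>UNIV. if k = l then c k * cnj (c l) * eB k $ j * cnj (eB l $ j') else 0)"
      by (intro sum.cong refl) (simp add: orth[OF onbA])
    also have "\<dots> = (\<Sum>k\<in>UNIV. c k * cnj (c k) * (eB k $ j * cnj (eB k $ j')))"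
      by (simp add: mult_ac)
    also have "\<dots> = 1 / of_nat CARD('n) * (\<Sum>k\<in>UNIV. eB k $ j * cnj (eB k $ j'))"
      by (simp add: cc sum_distrib_left)
    also have "\<dots> = max_mixed $ j $ j'"
      by (simp add: completeness[OF onbB] mm)
    finally show ?thesis .
  qed
  show ?thesis using A B by (simp add: vec_eq_iff)
qed

lemma cc_lem: "(exp (\<i> * complex_of_real t) / complex_of_real (sqrt (real CARD('n::finite)))) *
   cnj (exp (\<i> * complex_of_real t) / complex_of_real (sqrt (real CARD('n)))) = 1 / of_nat CARD('n)"
proof -
  define z where "z = \<i> * complex_of_real t"
  define s where "s = complex_of_real (sqrt (real CARD('n)))"
  have c: "cnj (exp z) = exp (- z)" unfolding z_def by (simp add: exp_cnj)
  have e: "exp z * exp (- z) = 1" by (simp add: exp_minus)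
  have cs: "cnj s = s" unfolding s_def by simp
  have ss: "s * s = of_nat CARD('n)" unfolding s_def
    by (simp add: of_real_mult[symmetric] del: of_real_mult)
  have "exp z / s * cnj (exp z / s) = (exp z * exp (- z)) / (s * s)"
    by (simp only: complex_cnj_divide c cs times_divide_times_eq)
  also have "\<dots> = 1 / of_nat CARD('n)" by (simp only: e ss)
  finally show ?thesis unfolding z_def s_def .
qed

lemma a_form:
  fixes e :: "'n::finite \<Rightarrow> complex^'n"
  shows "a_state e \<phi> = (\<Sum>k\<in>UNIV. (exp (\<i> * complex_of_real (\<phi> k)) / complex_of_real (sqrt (real CARD('n::finite)))) *s e k)"
  by (simp add: vec_eq_iff a_state_def sum_component sum_divide_distrib)

lemma tensor_sum: "tensor_vec (\<Sum>k\<in>S. c k *s x k) b = (\<Sum>k\<in>S. c k *s tensor_vec (x k) b)"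
  by (simp add: vec_eq_iff tensor_vec_def sum_component sum_distrib_left mult_ac)

theorem theorem4:
  fixes eA eB :: "'n::finite \<Rightarrow> complex ^ 'n"
    and b :: "complex ^ 'n"
    and U :: "complex ^ ('n \<times> 'n) ^ ('n \<times> 'n)"
  assumes onbA: "orthonormal_basis eA"
    and onbB: "orthonormal_basis eB"
    and b_unit: "cinner b b = 1"
    and U_unitary: "unitary_mat U"
    and U_action: "\<And>k. U *v tensor_vec (eA k) b = tensor_vec (eA k) (eB k)"
  shows "(\<forall>\<phi>::'n \<Rightarrow> real. (\<forall>k. \<phi> k \<in> {-pi..pi}) \<longrightarrow>
            (let \<psi> = U *v tensor_vec (a_state eA \<phi>) b in
               ptrace_B (outer \<psi> \<psi>) = max_mixed \<and> ptrace_A (outer \<psi> \<psi>) = max_mixed))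
       \<and> (\<forall>\<sigma>. \<sigma> \<in> convex hull {outer (a_state eA \<phi>) (a_state eA \<phi>) | \<phi>. \<forall>k. \<phi> k \<in> {-pi..pi}} \<longrightarrow>
            (let \<rho> = U ** tensor_mat \<sigma> (outer b b) ** mat_adjoint U in
               ptrace_B \<rho> = max_mixed \<and> ptrace_A \<rho> = max_mixed))"
proof -
  have P1: "ptrace_B (outer \<psi> \<psi>) = max_mixed \<and> ptrace_A (outer \<psi> \<psi>) = max_mixed"
    if "\<psi> = U *v tensor_vec (a_state eA \<phi>) b" for \<phi> \<psi>
  proof (rule pure[OF onbA onbB])
    show "\<And>k. (\<lambda>k. exp (\<i> * complex_of_real (\<phi> k)) / complex_of_real (sqrt (real CARD('n)))) k *
       cnj ((\<lambda>k. exp (\<i> * complex_of_real (\<phi> k)) / complex_of_real (sqrt (real CARD('n)))) k) = 1 / of_nat CARD('n)"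
      by (rule cc_lem)
    show "\<psi> = (\<Sum>k\<in>UNIV. (\<lambda>k. exp (\<i> * complex_of_real (\<phi> k)) / complex_of_real (sqrt (real CARD('n)))) k *s tensor_vec (eA k) (eB k))"
      by (simp only: that a_form tensor_sum push U_action)
  qed
  let ?G = "\<lambda>\<sigma>. U ** tensor_mat \<sigma> (outer b b) ** mat_adjoint U"
  let ?T = "{\<sigma>. ptrace_B (?G \<sigma>) = max_mixed \<and> ptrace_A (?G \<sigma>) = max_mixed}"
  have cT: "convex ?T"
    unfolding convex_def
  proof (intro ballI allI impI)
    fix x y u v assume x: "x \<in> ?T" and y: "y \<in> ?T" and uv: "0 \<le> (u::real)" "0 \<le> v" "u + v = 1"
    have "u *\<^sub>R max_mixed + v *\<^sub>R max_mixed = (max_mixed :: complex^'n^'n)"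
      by (simp add: scaleR_add_left[symmetric] uv)
    with x y show "u *\<^sub>R x + v *\<^sub>R y \<in> ?T"
      by (simp add: G_lin ptB_lin ptA_lin)
  qed
  have ST: "{outer (a_state eA \<phi>) (a_state eA \<phi>) | \<phi>. \<forall>k. \<phi> k \<in> {-pi..pi}} \<subseteq> ?T"
  proof
    fix \<sigma> assume "\<sigma> \<in> {outer (a_state eA \<phi>) (a_state eA \<phi>) | \<phi>. \<forall>k. \<phi> k \<in> {-pi..pi}}"
    then obtain \<phi> where s: "\<sigma> = outer (a_state eA \<phi>) (a_state eA \<phi>)" by blast
    show "\<sigma> \<in> ?T"
      using P1[OF refl, of \<phi>] by (simp add: s tensor_outer mult_outer)
  qed
  have H: "convex hull {outer (a_state eA \<phi>) (a_state eA \<phi>) | \<phi>. \<forall>k. \<phi> k \<in> {-pi..pi}} \<subseteq> ?T"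
    using ST cT by (rule hull_minimal)
  show ?thesis
  proof (intro conjI allI impI)
    fix \<phi> :: "'n \<Rightarrow> real"
    show "let \<psi> = U *v tensor_vec (a_state eA \<phi>) b in
               ptrace_B (outer \<psi> \<psi>) = max_mixed \<and> ptrace_A (outer \<psi> \<psi>) = max_mixed"
      unfolding Let_def by (rule P1[OF refl])
  next
    fix \<sigma> assume "\<sigma> \<in> convex hull {outer (a_state eA \<phi>) (a_state eA \<phi>) | \<phi>. \<forall>k. \<phi> k \<in> {-pi..pi}}"
    with H have "\<sigma> \<in> ?T" by (rule subsetD)
    then show "let \<rho> = U ** tensor_mat \<sigma> (outer b b) ** mat_adjoint U in
               ptrace_B \<rho> = max_mixed \<and> ptrace_A \<rho> = max_mixed"
      unfolding Let_def by (rule CollectD)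
  qed
qed

end
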